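(* Let $\mathbf v\in\mathrm{GF}(q^m)^n$ have rank $r\ge0$. The rank weight enumerator of $\mathcal L=\langle\mathbf v\rangle^\perp$ depends only on $r$ and equals $$W^{\mathrm R}_{\mathcal L}(x,y)=q^{-m}\left\{\big[x+(q^m-1)y\big]^{[n]}+(q^m-1)(x-y)^{[r]}*\big[x+(q^m-1)y\big]^{[n-r]}\right\}.$$
   Context: The rank of a vector over $\mathrm{GF}(q^m)$ is the maximum number of its coordinates linearly independent over $\mathrm{GF}(q)$. $\langle\mathbf v\rangle=\{a\mathbf v:a\in\mathrm{GF}(q^m)\}$ and $\perp$ denotes the dual with respect to the standard inner product $\sum_iu_iv_i$. The rank weight enumerator of a code $\mathcal C\subseteq\mathrm{GF}(q^m)^n$ is $\sum_{\mathbf u\in\mathcal C}y^{\mathrm{rk}(\mathbf u)}x^{n-\mathrm{rk}(\mathbf u)}$. $q$-product: for homogeneous polynomials $a(x,y;m)=\sum_{i=0}^r a_i(m)y^ix^{r-i}$ and $b(x,y;m)=\sum_{j=0}^s b_j(m)y^jx^{s-j}$ with coefficients real functions of $m$ (out-of-range coefficients zero), $a*b=\sum_{u=0}^{r+s}c_u(m)y^ux^{r+s-u}$ with $c_u(m)=\sum_{i=0}^u q^{is}a_i(m)b_{u-i}(m-i)$; $q$-powers: $a^{[0]}=1$, $a^{[n]}=a^{[n-1]}*a$. The polynomial $x+(q^m-1)y$ has coefficients $1$ and $q^m-1$, and $x-y$ has coefficients $1,-1$. *)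

theory Defs
  imports Complex_Main
begin

text \<open>F is a subfield of the ambient field (plays the role of GF(q) inside GF(q^m)).\<close>
definition is_subfield :: "'a::field set \<Rightarrow> bool" where
  "is_subfield F \<longleftrightarrow> 0 \<in> F \<and> 1 \<in> F \<and>
     (\<forall>a\<in>F. \<forall>b\<in>F. a + b \<in> F \<and> a * b \<in> F) \<and>
     (\<forall>a\<in>F. - a \<in> F \<and> inverse a \<in> F)"

definition lin_indep_over :: "'a::field set \<Rightarrow> nat set \<Rightarrow> 'a list \<Rightarrow> bool" where
  "lin_indep_over F S u \<longleftrightarrow>
     (\<forall>c. (\<forall>i\<in>S. c i \<in> F) \<and> (\<Sum>i\<in>S. c i * u ! i) = 0 \<longrightarrow> (\<forall>i\<in>S. c i = 0))"

definition rank_over :: "'a::field set \<Rightarrow> 'a list \<Rightarrow> nat" where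
  "rank_over F u = Max {card S | S. S \<subseteq> {..<length u} \<and> lin_indep_over F S u}"

definition dual_span :: "'a::field list \<Rightarrow> 'a list set" where
  "dual_span v = {u. length u = length v \<and> (\<Sum>i<length v. u ! i * v ! i) = 0}"

definition rank_weight_enum :: "'a::field set \<Rightarrow> nat \<Rightarrow> 'a list set \<Rightarrow> real \<Rightarrow> real \<Rightarrow> real" where
  "rank_weight_enum F n C x y = (\<Sum>u\<in>C. y ^ rank_over F u * x ^ (n - rank_over F u))"

text \<open>Homogeneous polynomial of degree d in x,y whose coefficients are real functions of m
  (m ranges over int so that shifts m - i make sense): represented as (d, a) with
  polynomial \<Sum>i=0..d. a i m y^i x^(d-i); coefficients with index > d are treated as zero.\<close>
type_synonym hpoly = "nat \<times> (nat \<Rightarrow> int \<Rightarrow> real)"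

definition hcoeff :: "hpoly \<Rightarrow> nat \<Rightarrow> int \<Rightarrow> real" where
  "hcoeff p i m = (if i \<le> fst p then snd p i m else 0)"

definition qprod :: "nat \<Rightarrow> hpoly \<Rightarrow> hpoly \<Rightarrow> hpoly" where
  "qprod q a b = (fst a + fst b,
     \<lambda>u m. \<Sum>i=0..u. real q ^ (i * fst b) * hcoeff a i m * hcoeff b (u - i) (m - int i))"

fun qpow :: "nat \<Rightarrow> hpoly \<Rightarrow> nat \<Rightarrow> hpoly" where
  "qpow q a 0 = (0, \<lambda>i m. 1)"
| "qpow q a (Suc n) = qprod q (qpow q a n) a"

definition heval :: "hpoly \<Rightarrow> int \<Rightarrow> real \<Rightarrow> real \<Rightarrow> real" where
  "heval p m x y = (\<Sum>i=0..fst p. hcoeff p i m * y ^ i * x ^ (fst p - i))"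

text \<open>x + (q^m - 1) y\<close>
definition poly_A :: "nat \<Rightarrow> hpoly" where
  "poly_A q = (1, \<lambda>i m. if i = 0 then 1 else real q powi m - 1)"

text \<open>x - y\<close>
definition poly_B :: "hpoly" where
  "poly_B = (1, \<lambda>i m. if i = 0 then 1 else -1)"

end

theory Submission
  imports Defs "HOL-Library.FuncSet"
begin


lemma fst_qprod[simp]: "fst (qprod q a b) = fst a + fst b"
  by (simp add: qprod_def)

lemma fst_qpow[simp]: "fst (qpow q a n) = n * fst a"
  by (induction n) auto

lemma fst_A[simp]: "fst (poly_A q) = 1" by (simp add: poly_A_def)
lemma fst_B[simp]: "fst poly_B = 1" by (simp add: poly_B_def)

lemma hcoeff_qprod:
  "hcoeff (qprod q a b) u m =
    (\<Sum>i=0..u. real q ^ (i * fst b) * hcoeff a i m * hcoeff b (u - i) (m - int i))"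
proof (cases "u \<le> fst a + fst b")
  case True then show ?thesis by (simp add: hcoeff_def qprod_def)
next
  case False
  have "(\<Sum>i=0..u. real q ^ (i * fst b) * hcoeff a i m * hcoeff b (u - i) (m - int i)) = 0"
    by (rule sum.neutral) (use False in \<open>auto simp: hcoeff_def\<close>)
  then show ?thesis using False by (simp add: hcoeff_def qprod_def)
qed

lemma qprod_cong:
  assumes "fst a = fst a'" "\<And>i m. hcoeff a i m = hcoeff a' i m"
  shows "qprod q a b = qprod q a' b"
  using assms by (simp add: qprod_def)

lemma hcoeff_A: "hcoeff (poly_A q) i m = (if i = 0 then 1 else if i = 1 then real q powi m - 1 else 0)"
  by (simp add: hcoeff_def poly_A_def)

lemma hcoeff_B: "hcoeff poly_B i m = (if i = 0 then 1 else if i = 1 then -1 else 0)"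
  by (simp add: hcoeff_def poly_B_def)

lemma hcoeff_unit: "hcoeff (0, \<lambda>i m. 1) i m = (if i = 0 then 1 else 0)"
  by (simp add: hcoeff_def)

lemma hcoeff_qprod_unit_left: "hcoeff (qprod q (0, \<lambda>i m. 1) b) u m = hcoeff b u m"
proof -
  have "(\<Sum>i=0..u. real q ^ (i * fst b) * hcoeff (0, \<lambda>i m. 1) i m * hcoeff b (u - i) (m - int i))
      = (\<Sum>i\<in>{0}. real q ^ (i * fst b) * hcoeff (0, \<lambda>i m. 1) i m * hcoeff b (u - i) (m - int i))"
    by (rule sum.mono_neutral_right) (auto simp: hcoeff_unit)
  then show ?thesis by (simp add: hcoeff_qprod hcoeff_unit)
qed

lemma hcoeff_qprod_unit_right: "hcoeff (qprod q a (0, \<lambda>i m. 1)) u m = hcoeff a u m"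
proof -
  have "(\<Sum>i=0..u. real q ^ (i * 0) * hcoeff a i m * hcoeff (0, \<lambda>i m. 1) (u - i) (m - int i))
      = (\<Sum>i\<in>{u}. real q ^ (i * 0) * hcoeff a i m * hcoeff (0, \<lambda>i m. 1) (u - i) (m - int i))"
    by (rule sum.mono_neutral_right) (auto simp: hcoeff_unit)
  then show ?thesis by (simp add: hcoeff_qprod hcoeff_unit)
qed

lemma hcoeff_qprod_two:
  assumes "fst b = 1" "\<And>j m. j \<ge> 2 \<Longrightarrow> hcoeff b j m = 0"
  shows "hcoeff (qprod q a b) k m = real q ^ k * hcoeff a k m * hcoeff b 0 (m - int k) +
     (if k = 0 then 0 else real q ^ (k - 1) * hcoeff a (k - 1) m * hcoeff b 1 (m - int (k - 1)))"
proof (cases k)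
  case 0 then show ?thesis by (simp add: hcoeff_qprod assms)
next
  case (Suc j)
  have "(\<Sum>i=0..Suc j. real q ^ (i * fst b) * hcoeff a i m * hcoeff b (Suc j - i) (m - int i))
     = (\<Sum>i\<in>{j, Suc j}. real q ^ (i * fst b) * hcoeff a i m * hcoeff b (Suc j - i) (m - int i))"
    by (rule sum.mono_neutral_right) (auto simp: assms(2))
  then show ?thesis using Suc by (simp add: hcoeff_qprod assms(1))
qed

lemma hcoeff_qprod_A:
  "hcoeff (qprod q a (poly_A q)) k m = real q ^ k * hcoeff a k m +
     (if k = 0 then 0 else real q ^ (k - 1) * hcoeff a (k - 1) m * (real q powi (m - int (k - 1)) - 1))"
  by (subst hcoeff_qprod_two) (auto simp: hcoeff_A)

lemma hcoeff_qprod_B: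
  "hcoeff (qprod q a poly_B) k m = real q ^ k * hcoeff a k m -
     (if k = 0 then 0 else real q ^ (k - 1) * hcoeff a (k - 1) m)"
  by (subst hcoeff_qprod_two) (auto simp: hcoeff_B)

lemma qprod_assoc:
  "hcoeff (qprod q (qprod q a b) c) u m = hcoeff (qprod q a (qprod q b c)) u m"
proof -
  define g where "g = (\<lambda>j l. real q ^ ((j + l) * fst c + j * fst b) * hcoeff a j m *
       hcoeff b l (m - int j) * hcoeff c (u - (j + l)) (m - int (j + l)))"
  have L: "hcoeff (qprod q (qprod q a b) c) u m = (\<Sum>(j,l)\<in>{(j,l). j + l \<le> u}. g j l)"
  proof -
    have "hcoeff (qprod q (qprod q a b) c) u m =
       (\<Sum>i\<le>u. \<Sum>j\<le>i. g j (i - j))"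
      unfolding hcoeff_qprod atLeast0AtMost
      by (auto simp: g_def sum_distrib_left sum_distrib_right power_add add_mult_distrib
           mult_ac intro!: sum.cong)
    then show ?thesis by (simp add: sum.triangle_reindex_eq)
  qed
  have R: "hcoeff (qprod q a (qprod q b c)) u m = (\<Sum>j\<le>u. \<Sum>l\<le>u - j. g j l)"
    unfolding hcoeff_qprod atLeast0AtMost
    by (auto simp: g_def sum_distrib_left sum_distrib_right power_add add_mult_distrib
           add_mult_distrib2 mult_ac diff_diff_add algebra_simps intro!: sum.cong)
  have "{(j,l). j + l \<le> u} = Sigma {..u} (\<lambda>j. {..u - j})" by auto
  then have "(\<Sum>(j,l)\<in>{(j,l). j + l \<le> u}. g j l) = (\<Sum>j\<le>u. \<Sum>l\<le>u - j. g j l)"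
    by (simp add: sum.Sigma)
  then show ?thesis using L R by simp
qed



locale setting =
  fixes F :: "'a::{finite,field} set" and q m :: nat
  assumes sub: "is_subfield F" and cardF: "card F = q" and cardU: "card (UNIV::'a set) = q ^ m"
begin

lemma F0[simp]: "0 \<in> F" using sub by (simp add: is_subfield_def)
lemma F1[simp]: "1 \<in> F" using sub by (simp add: is_subfield_def)
lemma Fadd[simp]: "a \<in> F \<Longrightarrow> b \<in> F \<Longrightarrow> a + b \<in> F" using sub by (simp add: is_subfield_def)
lemma Fmul[simp]: "a \<in> F \<Longrightarrow> b \<in> F \<Longrightarrow> a * b \<in> F" using sub by (simp add: is_subfield_def)
lemma Fneg[simp]: "a \<in> F \<Longrightarrow> - a \<in> F" using sub by (simp add: is_subfield_def)
lemma Finv[simp]: "a \<in> F \<Longrightarrow> inverse a \<in> F" using sub by (simp add: is_subfield_def)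
lemma Fdiff[simp]: "a \<in> F \<Longrightarrow> b \<in> F \<Longrightarrow> a - b \<in> F"
  using Fadd[of a "-b"] by simp
lemma Fdiv[simp]: "a \<in> F \<Longrightarrow> b \<in> F \<Longrightarrow> a / b \<in> F"
  by (simp add: divide_inverse)
lemma Fsum: "(\<And>i. i \<in> I \<Longrightarrow> f i \<in> F) \<Longrightarrow> sum f I \<in> F"
  by (induction I rule: infinite_finite_induct) auto

lemma q2: "q \<ge> 2"
proof -
  have "card {0::'a, 1} \<le> card F" by (rule card_mono) auto
  then show ?thesis using cardF by simp
qed

lemma qpos: "q > 0" using q2 by simp

definition Cset :: "nat \<Rightarrow> (nat \<Rightarrow> 'a) set" where
  "Cset n = PiE {..<n} (\<lambda>_. F)"

definition lin :: "'a list \<Rightarrow> (nat \<Rightarrow> 'a) \<Rightarrow> 'a" where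
  "lin u c = (\<Sum>i<length u. c i * u ! i)"

definition spI :: "'a list \<Rightarrow> nat set \<Rightarrow> 'a set" where
  "spI u I = (\<lambda>c. \<Sum>i\<in>I. c i * u ! i) ` PiE I (\<lambda>_. F)"

definition spn :: "'a list \<Rightarrow> 'a set" where
  "spn u = lin u ` Cset (length u)"

lemma spn_spI: "spn u = spI u {..<length u}"
  by (simp add: spn_def spI_def lin_def Cset_def)

lemma finite_Cset[simp]: "finite (Cset n)"
  by (simp add: Cset_def finite_PiE)

lemma card_Cset: "card (Cset n) = q ^ n"
  by (simp add: Cset_def card_PiE cardF)

lemma spI_0: "0 \<in> spI u I"
  unfolding spI_def
  by (rule image_eqI[where x="\<lambda>i\<in>I. 0"]) auto

lemma spI_add: assumes "x \<in> spI u I" "y \<in> spI u I" shows "x + y \<in> spI u I"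
proof -
  obtain c where c: "c \<in> PiE I (\<lambda>_. F)" "x = (\<Sum>i\<in>I. c i * u ! i)" using assms(1) by (auto simp: spI_def)
  obtain d where d: "d \<in> PiE I (\<lambda>_. F)" "y = (\<Sum>i\<in>I. d i * u ! i)" using assms(2) by (auto simp: spI_def)
  have "x + y = (\<Sum>i\<in>I. (\<lambda>i\<in>I. c i + d i) i * u ! i)"
    by (simp add: c d sum.distrib[symmetric] distrib_right)
  moreover have "(\<lambda>i\<in>I. c i + d i) \<in> PiE I (\<lambda>_. F)" using c d by (auto simp: PiE_iff)
  ultimately show ?thesis unfolding spI_def by blast
qed

lemma spI_smult: assumes "a \<in> F" "x \<in> spI u I" shows "a * x \<in> spI u I"
proof -
  obtain c where c: "c \<in> PiE I (\<lambda>_. F)" "x = (\<Sum>i\<in>I. c i * u ! i)" using assms(2) by (auto simp: spI_def)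
  have "a * x = (\<Sum>i\<in>I. (\<lambda>i\<in>I. a * c i) i * u ! i)"
    by (simp add: c sum_distrib_left mult.assoc)
  moreover have "(\<lambda>i\<in>I. a * c i) \<in> PiE I (\<lambda>_. F)" using c assms(1) by (auto simp: PiE_iff)
  ultimately show ?thesis unfolding spI_def by blast
qed

lemma spI_sum: "(\<And>j. j \<in> J \<Longrightarrow> g j \<in> spI u I) \<Longrightarrow> sum g J \<in> spI u I"
  by (induction J rule: infinite_finite_induct) (auto simp: spI_0 spI_add)

lemma spI_nth: assumes "finite I" "i \<in> I" shows "u ! i \<in> spI u I"
proof -
  have "(\<Sum>j\<in>I. (\<lambda>j\<in>I. if j = i then 1 else 0) j * u ! j) = (\<Sum>j\<in>I. if j = i then u ! j else 0)"
    by (rule sum.cong) auto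
  also have "\<dots> = u ! i" using assms by simp
  finally show ?thesis unfolding spI_def
    by (intro image_eqI[where x="\<lambda>j\<in>I. if j = i then 1 else 0"]) auto
qed

lemma extend_indep:
  assumes "finite I" "lin_indep_over F I u" "j \<notin> I" "u ! j \<notin> spI u I"
  shows "lin_indep_over F (insert j I) u"
  unfolding lin_indep_over_def
proof (intro allI impI)
  fix c assume H: "(\<forall>i\<in>insert j I. c i \<in> F) \<and> (\<Sum>i\<in>insert j I. c i * u ! i) = 0"
  then have S: "c j * u ! j + (\<Sum>i\<in>I. c i * u ! i) = 0" using assms by simp
  have cj: "c j = 0"
  proof (rule ccontr)
    assume nz: "c j \<noteq> 0"
    have "u ! j = (\<Sum>i\<in>I. (\<lambda>i\<in>I. - c i / c j) i * u ! i)"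
    proof -
      have "u ! j = - (\<Sum>i\<in>I. c i * u ! i) / c j" using S nz by (simp add: field_simps eq_neg_iff_add_eq_0)
      also have "\<dots> = (\<Sum>i\<in>I. (- c i / c j) * u ! i)"
        by (simp add: sum_divide_distrib[symmetric] sum_negf[symmetric] divide_inverse mult_ac sum_distrib_left)
      also have "\<dots> = (\<Sum>i\<in>I. (\<lambda>i\<in>I. - c i / c j) i * u ! i)" by (rule sum.cong) auto
      finally show ?thesis .
    qed
    moreover have "(\<lambda>i\<in>I. - c i / c j) \<in> PiE I (\<lambda>_. F)" using H by auto
    ultimately have "u ! j \<in> spI u I" unfolding spI_def by blast
    then show False using assms(4) by simp
  qed
  then have "(\<Sum>i\<in>I. c i * u ! i) = 0" using S by simp
  then have "\<forall>i\<in>I. c i = 0" using assms(2) H unfolding lin_indep_over_def by blast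
  then show "\<forall>i\<in>insert j I. c i = 0" using cj by simp
qed

lemma indep_card_spI:
  assumes "finite I" "lin_indep_over F I u"
  shows "card (spI u I) = q ^ card I"
proof -
  have "inj_on (\<lambda>c. \<Sum>i\<in>I. c i * u ! i) (PiE I (\<lambda>_. F))"
  proof (rule inj_onI)
    fix c d assume c: "c \<in> PiE I (\<lambda>_. F)" and d: "d \<in> PiE I (\<lambda>_. F)"
      and eq: "(\<Sum>i\<in>I. c i * u ! i) = (\<Sum>i\<in>I. d i * u ! i)"
    have "(\<Sum>i\<in>I. (c i - d i) * u ! i) = 0"
      using eq by (simp add: left_diff_distrib sum_subtractf)
    moreover have "\<forall>i\<in>I. c i - d i \<in> F" using c d by (auto simp: PiE_iff)
    ultimately have "\<forall>i\<in>I. c i - d i = 0" using assms(2) unfolding lin_indep_over_def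
      by (elim allE[where x="\<lambda>i. c i - d i"]) blast
    then show "c = d" using c d by (intro PiE_ext) auto
  qed
  then have "card (spI u I) = card (PiE I (\<lambda>_. F))" by (simp add: spI_def card_image)
  also have "\<dots> = q ^ card I" using assms(1) by (simp add: card_PiE cardF)
  finally show ?thesis .
qed

lemma rank_set:
  shows "finite {card S | S. S \<subseteq> {..<length u} \<and> lin_indep_over F S u}"
    and "0 \<in> {card S | S. S \<subseteq> {..<length u} \<and> lin_indep_over F S u}"
proof -
  have "{card S | S. S \<subseteq> {..<length u} \<and> lin_indep_over F S u} \<subseteq> card ` Pow {..<length u}" by auto
  then show "finite {card S | S. S \<subseteq> {..<length u} \<and> lin_indep_over F S u}"
    by (rule finite_subset) auto
  have "lin_indep_over F {} u" by (simp add: lin_indep_over_def)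
  then show "0 \<in> {card S | S. S \<subseteq> {..<length u} \<and> lin_indep_over F S u}"
    by (intro CollectI exI[where x="{}"]) auto
qed

lemma rank_witness:
  obtains I where "I \<subseteq> {..<length u}" "lin_indep_over F I u" "card I = rank_over F u"
    "\<And>J. J \<subseteq> {..<length u} \<Longrightarrow> lin_indep_over F J u \<Longrightarrow> card J \<le> card I"
proof -
  let ?R = "{card S | S. S \<subseteq> {..<length u} \<and> lin_indep_over F S u}"
  have "Max ?R \<in> ?R" using rank_set by (intro Max_in) auto
  then obtain I where I: "I \<subseteq> {..<length u}" "lin_indep_over F I u" "card I = Max ?R" by auto
  have mx: "\<And>J. J \<subseteq> {..<length u} \<Longrightarrow> lin_indep_over F J u \<Longrightarrow> card J \<le> card I"
    using I(3) rank_set(1) by (auto intro!: Max_ge)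
  have r: "card I = rank_over F u" using I(3) by (simp add: rank_over_def)
  show ?thesis by (rule that[OF I(1) I(2) r mx])
qed

lemma rank_witness':
  "\<exists>I. I \<subseteq> {..<length u} \<and> lin_indep_over F I u \<and> card I = rank_over F u \<and>
    (\<forall>J. J \<subseteq> {..<length u} \<and> lin_indep_over F J u \<longrightarrow> card J \<le> card I)"
proof -
  let ?R = "{card S | S. S \<subseteq> {..<length u} \<and> lin_indep_over F S u}"
  have "Max ?R \<in> ?R" using rank_set by (intro Max_in) auto
  then obtain I where I: "I \<subseteq> {..<length u}" "lin_indep_over F I u" "card I = Max ?R" by auto
  have mx: "\<forall>J. J \<subseteq> {..<length u} \<and> lin_indep_over F J u \<longrightarrow> card J \<le> card I"
    using I(3) rank_set(1) by (auto intro!: Max_ge)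
  have r: "card I = rank_over F u" using I(3) by (simp add: rank_over_def)
  show ?thesis using I(1,2) r mx by (intro exI[of _ I]) simp
qed

lemma rank_le: "rank_over F u \<le> length u"
proof -
  obtain I where "I \<subseteq> {..<length u}" "card I = rank_over F u" by (rule rank_witness[of u])
  then show ?thesis using card_mono[of "{..<length u}" I] by simp
qed

lemma card_spn: "card (spn u) = q ^ rank_over F u"
proof -
  let ?n = "length u"
  obtain I where I: "I \<subseteq> {..<?n}" "lin_indep_over F I u" "card I = rank_over F u"
    and mx: "\<And>J. J \<subseteq> {..<?n} \<Longrightarrow> lin_indep_over F J u \<Longrightarrow> card J \<le> card I"
    using rank_witness[of u] by blast
  have finI: "finite I" using I(1) finite_subset by blast
  have nth_in: "u ! j \<in> spI u I" if j: "j < ?n" for j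
  proof (cases "j \<in> I")
    case True then show ?thesis using finI spI_nth by blast
  next
    case False
    show ?thesis
    proof (rule ccontr)
      assume "u ! j \<notin> spI u I"
      then have "lin_indep_over F (insert j I) u" using extend_indep finI I(2) False by blast
      then have "card (insert j I) \<le> card I" using mx I(1) j by auto
      then show False using False finI by simp
    qed
  qed
  have "spn u = spI u I"
  proof
    show "spn u \<subseteq> spI u I"
    proof
      fix x assume "x \<in> spn u"
      then obtain c where c: "c \<in> Cset ?n" "x = (\<Sum>j<?n. c j * u ! j)" by (auto simp: spn_def lin_def)
      have "c j * u ! j \<in> spI u I" if "j \<in> {..<?n}" for j
        using c that nth_in by (intro spI_smult) (auto simp: Cset_def)
      then show "x \<in> spI u I" unfolding c(2) by (rule spI_sum)
    qed
  next
    show "spI u I \<subseteq> spn u"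
    proof
      fix x assume "x \<in> spI u I"
      then obtain c where c: "c \<in> PiE I (\<lambda>_. F)" "x = (\<Sum>i\<in>I. c i * u ! i)" by (auto simp: spI_def)
      let ?c = "\<lambda>i\<in>{..<?n}. if i \<in> I then c i else 0"
      have "?c \<in> Cset ?n" using c by (auto simp: Cset_def)
      moreover have "lin u ?c = x"
        unfolding lin_def c(2)
        using I(1) finI by (intro sum.mono_neutral_cong_right) auto
      ultimately show "x \<in> spn u" unfolding spn_def by blast
    qed
  qed
  then show ?thesis using indep_card_spI[OF finI I(2)] I(3) by simp
qed

lemma pow_inj: "q ^ a = q ^ b \<Longrightarrow> a = b"
  using q2 power_inject_exp[of q a b] by simp

lemma rank_eq_of_spn: "spn u = spn u' \<Longrightarrow> rank_over F u = rank_over F u'"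
  using card_spn[of u] card_spn[of u'] q2 by simp

lemma finite_spn[simp]: "finite (spn u)" by simp

lemma spn_0[simp]: "0 \<in> spn u" using spI_0 spn_spI by simp
lemma spn_add: "x \<in> spn u \<Longrightarrow> y \<in> spn u \<Longrightarrow> x + y \<in> spn u" using spI_add spn_spI by simp
lemma spn_smult: "a \<in> F \<Longrightarrow> x \<in> spn u \<Longrightarrow> a * x \<in> spn u" using spI_smult spn_spI by simp
lemma spn_diff: "x \<in> spn u \<Longrightarrow> y \<in> spn u \<Longrightarrow> x - y \<in> spn u"
  using spn_add[of x u "(-1) * y"] spn_smult[of "-1" y u] by simp
lemma lin_in_spn: "c \<in> Cset (length u) \<Longrightarrow> lin u c \<in> spn u" by (simp add: spn_def)

lemma lin_cong: "(\<And>i. i < length u \<Longrightarrow> c i = d i) \<Longrightarrow> lin u c = lin u d"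
  unfolding lin_def by (rule sum.cong) auto


lemma Cset_mem: "c \<in> Cset n \<Longrightarrow> i < n \<Longrightarrow> c i \<in> F"
  by (auto simp: Cset_def PiE_iff)

lemma Cset_restrict: "(\<And>i. i < n \<Longrightarrow> c i \<in> F) \<Longrightarrow> restrict c {..<n} \<in> Cset n"
  by (auto simp: Cset_def PiE_iff)

lemma lin_snoc: "lin (u @ [t]) c = lin u c + c (length u) * t"
proof -
  have "(\<Sum>i<length u. c i * (u @ [t]) ! i) = (\<Sum>i<length u. c i * u ! i)"
    by (rule sum.cong) (auto simp: nth_append)
  then show ?thesis by (simp add: lin_def)
qed

lemma spn_snoc: "spn (u @ [t]) = {y + a * t | y a. y \<in> spn u \<and> a \<in> F}"
proof
  let ?n = "length u"
  show "spn (u @ [t]) \<subseteq> {y + a * t | y a. y \<in> spn u \<and> a \<in> F}"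
  proof
    fix x assume "x \<in> spn (u @ [t])"
    then obtain c where c: "c \<in> Cset (Suc ?n)" "x = lin (u @ [t]) c" by (auto simp: spn_def)
    have "lin u c = lin u (restrict c {..<?n})" by (rule lin_cong) auto
    moreover have "restrict c {..<?n} \<in> Cset ?n" using c(1) by (intro Cset_restrict) (rule Cset_mem[OF c(1)], simp)
    ultimately have "lin u c \<in> spn u" by (auto simp: spn_def)
    moreover have "c ?n \<in> F" using c(1) by (rule Cset_mem) simp
    ultimately show "x \<in> {y + a * t | y a. y \<in> spn u \<and> a \<in> F}" using c(2) by (auto simp: lin_snoc)
  qed
next
  let ?n = "length u"
  show "{y + a * t | y a. y \<in> spn u \<and> a \<in> F} \<subseteq> spn (u @ [t])"
  proof clarify
    fix y a assume y: "y \<in> spn u" and a: "a \<in> F"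
    obtain c where c: "c \<in> Cset ?n" "y = lin u c" using y by (auto simp: spn_def)
    let ?c = "restrict (\<lambda>i. if i < ?n then c i else a) {..<Suc ?n}"
    have "?c \<in> Cset (Suc ?n)" using c(1) a by (intro Cset_restrict) (auto simp: Cset_mem)
    moreover have "lin (u @ [t]) ?c = y + a * t"
      unfolding lin_snoc c(2) by (auto intro!: lin_cong)
    ultimately show "y + a * t \<in> spn (u @ [t])" unfolding spn_def by (intro image_eqI[where x="?c"]) simp_all
  qed
qed

lemma rank_snoc: "rank_over F (u @ [t]) = rank_over F u + (if t \<in> spn u then 0 else 1)"
proof (cases "t \<in> spn u")
  case True
  have "spn (u @ [t]) = spn u"
  proof
    show "spn (u @ [t]) \<subseteq> spn u" unfolding spn_snoc
    proof clarify
      fix y a assume "y \<in> spn u" "a \<in> F"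
      then show "y + a * t \<in> spn u" using True by (intro spn_add spn_smult)
    qed
    show "spn u \<subseteq> spn (u @ [t])" unfolding spn_snoc
    proof
      fix y assume "y \<in> spn u"
      then show "y \<in> {y + a * t | y a. y \<in> spn u \<and> a \<in> F}" by (intro CollectI exI[of _ y] exI[of _ 0]) simp
    qed
  qed
  from rank_eq_of_spn[OF this] show ?thesis using True by simp
next
  case False
  have inj: "inj_on (\<lambda>(y, a). y + a * t) (spn u \<times> F)"
  proof (rule inj_onI, clarify)
    fix y a y' a' assume H: "y \<in> spn u" "a \<in> F" "y' \<in> spn u" "a' \<in> F" "y + a * t = y' + a' * t"
    have "a = a'"
    proof (rule ccontr)
      assume ne: "a \<noteq> a'"
      have "(a - a') * t = y' - y" using H(5) by (simp add: algebra_simps)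
      then have "t = inverse (a - a') * (y' - y)" using ne by (simp add: field_simps)
      moreover have "inverse (a - a') * (y' - y) \<in> spn u" using H by (intro spn_smult spn_diff) auto
      ultimately show False using False by simp
    qed
    then show "y = y' \<and> a = a'" using H(5) by simp
  qed
  have "spn (u @ [t]) = (\<lambda>(y, a). y + a * t) ` (spn u \<times> F)" unfolding spn_snoc by auto
  then have "card (spn (u @ [t])) = card (spn u \<times> F)" using inj by (simp add: card_image)
  also have "\<dots> = card (spn u) * q" by (simp add: card_cartesian_product cardF)
  finally have "q ^ rank_over F (u @ [t]) = q ^ (rank_over F u + 1)" by (simp add: card_spn)
  then have "rank_over F (u @ [t]) = rank_over F u + 1" by (rule pow_inj)
  then show ?thesis using False by simp
qed

lemma indep_iff: "rank_over F u = length u \<longleftrightarrow> lin_indep_over F {..<length u} u"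
proof
  assume r: "rank_over F u = length u"
  obtain I where I: "I \<subseteq> {..<length u}" "lin_indep_over F I u" "card I = rank_over F u"
    using rank_witness'[of u] by (elim exE conjE) (rule that)
  have "I = {..<length u}" using I r by (intro card_subset_eq) auto
  then show "lin_indep_over F {..<length u} u" using I by simp
next
  assume H: "lin_indep_over F {..<length u} u"
  obtain I where I: "I \<subseteq> {..<length u}" "lin_indep_over F I u" "card I = rank_over F u"
    and mx: "\<forall>J. J \<subseteq> {..<length u} \<and> lin_indep_over F J u \<longrightarrow> card J \<le> card I"
    using rank_witness'[of u] by (elim exE conjE) (rule that)
  have "length u \<le> rank_over F u" using mx H I(3) by auto
  then show "rank_over F u = length u" using rank_le[of u] by simp
qed

lemma fib_card:
  assumes z: "z \<in> spn u"
  shows "card {c \<in> Cset (length u). lin u c = z} = q ^ (length u - rank_over F u)"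
proof -
  let ?n = "length u"
  have eqc: "card {c \<in> Cset ?n. lin u c = z} = card {c \<in> Cset ?n. lin u c = 0}" if z: "z \<in> spn u" for z
  proof -
    obtain c0 where c0: "c0 \<in> Cset ?n" "lin u c0 = z" using z by (auto simp: spn_def)
    have lsub: "lin u (restrict (\<lambda>i. c i - c0 i) {..<?n}) = lin u c - lin u c0" for c
    proof -
      have "lin u (restrict (\<lambda>i. c i - c0 i) {..<?n}) = lin u (\<lambda>i. c i - c0 i)" by (rule lin_cong) auto
      then show ?thesis by (simp add: lin_def left_diff_distrib sum_subtractf)
    qed
    have ladd: "lin u (restrict (\<lambda>i. c i + c0 i) {..<?n}) = lin u c + lin u c0" for c
    proof -
      have "lin u (restrict (\<lambda>i. c i + c0 i) {..<?n}) = lin u (\<lambda>i. c i + c0 i)" by (rule lin_cong) auto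
      then show ?thesis by (simp add: lin_def distrib_right sum.distrib)
    qed
    have "bij_betw (\<lambda>c. restrict (\<lambda>i. c i - c0 i) {..<?n}) {c \<in> Cset ?n. lin u c = z} {c \<in> Cset ?n. lin u c = 0}"
    proof (rule bij_betwI[where g="\<lambda>c. restrict (\<lambda>i. c i + c0 i) {..<?n}"])
      show "(\<lambda>c. restrict (\<lambda>i. c i - c0 i) {..<?n}) \<in> {c \<in> Cset ?n. lin u c = z} \<rightarrow> {c \<in> Cset ?n. lin u c = 0}"
      proof
        fix c assume c: "c \<in> {c \<in> Cset ?n. lin u c = z}"
        have "restrict (\<lambda>i. c i - c0 i) {..<?n} \<in> Cset ?n"
        proof (rule Cset_restrict)
          fix i assume "i < ?n"
          then show "c i - c0 i \<in> F" using Cset_mem[of c ?n i] Cset_mem[of c0 ?n i] c c0 by simp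
        qed
        then show "restrict (\<lambda>i. c i - c0 i) {..<?n} \<in> {c \<in> Cset ?n. lin u c = 0}"
          using c c0 by (simp add: lsub)
      qed
      show "(\<lambda>c. restrict (\<lambda>i. c i + c0 i) {..<?n}) \<in> {c \<in> Cset ?n. lin u c = 0} \<rightarrow> {c \<in> Cset ?n. lin u c = z}"
      proof
        fix c assume c: "c \<in> {c \<in> Cset ?n. lin u c = 0}"
        have "restrict (\<lambda>i. c i + c0 i) {..<?n} \<in> Cset ?n"
        proof (rule Cset_restrict)
          fix i assume "i < ?n"
          then show "c i + c0 i \<in> F" using Cset_mem[of c ?n i] Cset_mem[of c0 ?n i] c c0 by simp
        qed
        then show "restrict (\<lambda>i. c i + c0 i) {..<?n} \<in> {c \<in> Cset ?n. lin u c = z}"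
          using c c0 by (simp add: ladd)
      qed
      fix c assume c: "c \<in> {c \<in> Cset ?n. lin u c = z}"
      have "restrict (\<lambda>i. restrict (\<lambda>i. c i - c0 i) {..<?n} i + c0 i) {..<?n} = restrict c {..<?n}"
        by (rule restrict_ext) simp
      also have "\<dots> = c"
      proof -
        from c have "c \<in> Cset ?n" by simp
        then show ?thesis unfolding Cset_def by (rule PiE_restrict)
      qed
      finally show "restrict (\<lambda>i. restrict (\<lambda>i. c i - c0 i) {..<?n} i + c0 i) {..<?n} = c" .
    next
      fix c assume c: "c \<in> {c \<in> Cset ?n. lin u c = 0}"
      have "restrict (\<lambda>i. restrict (\<lambda>i. c i + c0 i) {..<?n} i - c0 i) {..<?n} = restrict c {..<?n}"
        by (rule restrict_ext) simp
      also have "\<dots> = c"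
      proof -
        from c have "c \<in> Cset ?n" by simp
        then show ?thesis unfolding Cset_def by (rule PiE_restrict)
      qed
      finally show "restrict (\<lambda>i. restrict (\<lambda>i. c i + c0 i) {..<?n} i - c0 i) {..<?n} = c" .
    qed
    then show ?thesis by (rule bij_betw_same_card)
  qed
  have "card (Cset ?n) = (\<Sum>z\<in>spn u. card {c \<in> Cset ?n. lin u c = z})"
  proof -
    have "(\<Sum>z\<in>spn u. \<Sum>c\<in>{c. c \<in> Cset ?n \<and> lin u c = z}. (1::nat)) = (\<Sum>c\<in>Cset ?n. 1)"
      by (rule sum.group) (auto simp: spn_def)
    then show ?thesis by simp
  qed
  also have "\<dots> = (\<Sum>z\<in>spn u. card {c \<in> Cset ?n. lin u c = 0})" by (rule sum.cong[OF refl], rule eqc)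
  finally have "q ^ ?n = q ^ rank_over F u * card {c \<in> Cset ?n. lin u c = 0}"
    by (simp add: card_Cset card_spn)
  moreover have "q ^ ?n = q ^ rank_over F u * q ^ (?n - rank_over F u)"
    using rank_le[of u] by (simp flip: power_add)
  ultimately have "card {c \<in> Cset ?n. lin u c = 0} = q ^ (?n - rank_over F u)" using qpos by simp
  then show ?thesis using eqc[OF z] by simp
qed

lemma rank_scale: assumes "a \<noteq> 0" shows "rank_over F (map ((*) a) u) = rank_over F u"
proof -
  have l: "lin (map ((*) a) u) c = a * lin u c" for c
  proof -
    have "lin (map ((*) a) u) c = (\<Sum>i<length u. a * (c i * u ! i))"
      unfolding lin_def by (rule sum.cong) (auto simp: mult_ac)
    then show ?thesis by (simp add: lin_def sum_distrib_left)
  qed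
  have "spn (map ((*) a) u) = (*) a ` spn u" by (auto simp: spn_def l image_image)
  moreover have "inj_on ((*) a) (spn u)" using assms by (simp add: inj_on_def)
  ultimately have "card (spn (map ((*) a) u)) = card (spn u)"
    by (simp add: card_image)
  then show ?thesis unfolding card_spn by (rule pow_inj)
qed

definition permute :: "(nat \<Rightarrow> nat) \<Rightarrow> 'a list \<Rightarrow> 'a list" where
  "permute p u = map (\<lambda>k. u ! p k) [0..<length u]"

lemma permute_length[simp]: "length (permute p u) = length u" by (simp add: permute_def)
lemma permute_nth[simp]: "k < length u \<Longrightarrow> permute p u ! k = u ! p k" by (simp add: permute_def)

definition invol :: "(nat \<Rightarrow> nat) \<Rightarrow> nat \<Rightarrow> bool" where
  "invol p n \<longleftrightarrow> (\<forall>k<n. p k < n \<and> p (p k) = k)"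

lemma sum_perm: "invol p n \<Longrightarrow> (\<Sum>k<n. g (p k)) = (\<Sum>k<n. g k)"
  unfolding invol_def by (rule sum.reindex_bij_witness[where i=p and j=p]) auto

lemma permute_permute: "invol p (length u) \<Longrightarrow> permute p (permute p u) = u"
  by (rule nth_equalityI) (auto simp: invol_def)

lemma spn_permute_sub: assumes "invol p (length u)" shows "spn (permute p u) \<subseteq> spn u"
proof
  let ?n = "length u"
  fix x assume "x \<in> spn (permute p u)"
  then obtain c where c: "c \<in> Cset ?n" "x = lin (permute p u) c" by (auto simp: spn_def)
  have "x = (\<Sum>k<?n. c k * u ! p k)" unfolding c(2) lin_def by (rule sum.cong) auto
  also have "\<dots> = (\<Sum>k<?n. (\<lambda>k. c (p k) * u ! k) (p k))"
    using assms by (intro sum.cong) (auto simp: invol_def)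
  also have "\<dots> = (\<Sum>k<?n. c (p k) * u ! k)" by (rule sum_perm[OF assms])
  also have "\<dots> = lin u (restrict (\<lambda>k. c (p k)) {..<?n})" unfolding lin_def by (rule sum.cong) auto
  finally have xe: "x = lin u (restrict (\<lambda>k. c (p k)) {..<?n})" .
  have "restrict (\<lambda>k. c (p k)) {..<?n} \<in> Cset ?n"
    using assms c(1) by (intro Cset_restrict) (simp add: Cset_mem invol_def)
  then show "x \<in> spn u" unfolding spn_def using xe by blast
qed

lemma spn_permute: assumes "invol p (length u)" shows "spn (permute p u) = spn u"
proof
  show "spn (permute p u) \<subseteq> spn u" by (rule spn_permute_sub[OF assms])
  have "spn (permute p (permute p u)) \<subseteq> spn (permute p u)" using assms by (intro spn_permute_sub) simp
  then show "spn u \<subseteq> spn (permute p u)" using permute_permute[OF assms] by simp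
qed

lemma rank_permute: "invol p (length u) \<Longrightarrow> rank_over F (permute p u) = rank_over F u"
  by (rule rank_eq_of_spn) (rule spn_permute)

definition dot :: "'a list \<Rightarrow> 'a list \<Rightarrow> 'a" where
  "dot u v = (\<Sum>i<length v. u ! i * v ! i)"

lemma dot_permute:
  assumes "invol p (length v)" "length u = length v"
  shows "dot (permute p u) (permute p v) = dot u v"
proof -
  have "dot (permute p u) (permute p v) = (\<Sum>k<length v. (\<lambda>k. u ! k * v ! k) (p k))"
    unfolding dot_def using assms by (intro sum.cong) (auto simp: invol_def)
  also have "\<dots> = dot u v" unfolding dot_def by (rule sum_perm[OF assms(1)])
  finally show ?thesis .
qed


lemma finite_len[simp]: "finite {u::'a list. length u = n}"
  using finite_lists_length_eq[of "UNIV::'a set" n] by simp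

definition Nset :: "'a list \<Rightarrow> nat \<Rightarrow> 'a \<Rightarrow> 'a list set" where
  "Nset v k a = {u. length u = length v \<and> rank_over F u = k \<and> dot u v = a}"

definition N :: "'a list \<Rightarrow> nat \<Rightarrow> 'a \<Rightarrow> nat" where
  "N v k a = card (Nset v k a)"

definition D :: "'a list \<Rightarrow> nat \<Rightarrow> real" where
  "D v k = real (N v k 0) - real (N v k 1)"

definition Tset :: "nat \<Rightarrow> nat \<Rightarrow> 'a list set" where
  "Tset n k = {u. length u = n \<and> rank_over F u = k}"

definition T :: "nat \<Rightarrow> nat \<Rightarrow> nat" where
  "T n k = card (Tset n k)"

lemma finite_Nset[simp]: "finite (Nset v k a)"
  by (rule finite_subset[OF _ finite_len[of "length v"]]) (auto simp: Nset_def)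

lemma finite_Tset[simp]: "finite (Tset n k)"
  by (rule finite_subset[OF _ finite_len[of n]]) (auto simp: Tset_def)

lemma dot_snoc: "length u = length v \<Longrightarrow> dot (u @ [t]) (v @ [w]) = dot u v + t * w"
proof -
  assume l: "length u = length v"
  have "(\<Sum>i<length v. (u @ [t]) ! i * (v @ [w]) ! i) = (\<Sum>i<length v. u ! i * v ! i)"
    by (rule sum.cong) (auto simp: nth_append l)
  then show ?thesis using l by (simp add: dot_def nth_append)
qed

lemma N_snoc:
  "N (v @ [w]) k a = card {(u, t). length u = length v \<and> rank_over F (u @ [t]) = k \<and> dot u v + t * w = a}"
proof -
  let ?P = "{(u, t). length u = length v \<and> rank_over F (u @ [t]) = k \<and> dot u v + t * w = a}"
  have inj: "inj_on (\<lambda>(u, t). u @ [t]) ?P" by (auto simp: inj_on_def)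
  have "Nset (v @ [w]) k a = (\<lambda>(u, t). u @ [t]) ` ?P"
  proof
    show "Nset (v @ [w]) k a \<subseteq> (\<lambda>(u, t). u @ [t]) ` ?P"
    proof
      fix x assume x: "x \<in> Nset (v @ [w]) k a"
      then have lx: "length x = Suc (length v)" by (simp add: Nset_def)
      then have xe: "x = butlast x @ [last x]" by (intro append_butlast_last_id[symmetric]) auto
      have lb: "length (butlast x) = length v" using lx by simp
      have rx: "rank_over F x = k" "dot x (v @ [w]) = a" using x by (auto simp: Nset_def)
      have "rank_over F (butlast x @ [last x]) = k" unfolding xe[symmetric] by (rule rx(1))
      moreover have "dot (butlast x) v + last x * w = a"
        using rx(2) dot_snoc[OF lb, of "last x" w] unfolding xe[symmetric] by simp
      ultimately have "(butlast x, last x) \<in> ?P" using lb by simp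
      then show "x \<in> (\<lambda>(u, t). u @ [t]) ` ?P" by (rule rev_image_eqI) (simp add: xe[symmetric])
    qed
    show "(\<lambda>(u, t). u @ [t]) ` ?P \<subseteq> Nset (v @ [w]) k a"
      by (auto simp: Nset_def dot_snoc)
  qed
  then show ?thesis unfolding N_def using inj by (simp add: card_image)
qed

definition addv :: "'a list \<Rightarrow> 'a \<Rightarrow> (nat \<Rightarrow> 'a) \<Rightarrow> 'a list" where
  "addv u t c = map (\<lambda>i. u ! i + t * c i) [0..<length u]"

lemma addv_length[simp]: "length (addv u t c) = length u" by (simp add: addv_def)
lemma addv_nth[simp]: "i < length u \<Longrightarrow> addv u t c ! i = u ! i + t * c i" by (simp add: addv_def)

lemma addv_addv: "addv (addv u t c) t (\<lambda>i. - c i) = u"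
  by (rule nth_equalityI) (auto simp: algebra_simps)

lemma dot_addv: "length u = length v \<Longrightarrow> dot (addv u t c) v = dot u v + t * lin v c"
proof -
  assume l: "length u = length v"
  have "dot (addv u t c) v = (\<Sum>i<length v. u ! i * v ! i + t * (c i * v ! i))"
    unfolding dot_def by (rule sum.cong) (auto simp: l algebra_simps)
  then show ?thesis by (simp add: dot_def lin_def sum.distrib sum_distrib_left)
qed

lemma dot_addv2: "length u = length v \<Longrightarrow> dot u (addv v w c) = dot u v + w * lin u c"
proof -
  assume l: "length u = length v"
  have "dot u (addv v w c) = (\<Sum>i<length v. u ! i * v ! i + w * (c i * u ! i))"
    unfolding dot_def by (rule sum.cong) (auto simp: l algebra_simps)
  then show ?thesis by (simp add: dot_def lin_def sum.distrib sum_distrib_left l)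
qed

lemma lin_addv: "lin (addv u t c) d = lin u d + t * (\<Sum>i<length u. d i * c i)"
proof -
  have "lin (addv u t c) d = (\<Sum>i<length u. d i * u ! i + t * (d i * c i))"
    unfolding lin_def by (rule sum.cong) (auto simp: algebra_simps)
  then show ?thesis by (simp add: lin_def sum.distrib sum_distrib_left)
qed

lemma spn_addv_sub:
  assumes "\<And>i. i < length u \<Longrightarrow> c i \<in> F"
  shows "spn (addv u t c @ [t]) \<subseteq> spn (u @ [t])"
proof
  fix x assume "x \<in> spn (addv u t c @ [t])"
  then obtain y a where ya: "y \<in> spn (addv u t c)" "a \<in> F" "x = y + a * t" unfolding spn_snoc by blast
  obtain d where d: "d \<in> Cset (length u)" "y = lin (addv u t c) d" using ya(1) by (auto simp: spn_def)
  have sF: "(\<Sum>i<length u. d i * c i) \<in> F"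
    by (rule Fsum) (use d(1) assms Cset_mem in auto)
  have "x = lin u d + (a + (\<Sum>i<length u. d i * c i)) * t"
    using ya(3) d(2) by (simp add: lin_addv algebra_simps)
  moreover have "lin u d \<in> spn u" using d(1) by (rule lin_in_spn)
  moreover have "a + (\<Sum>i<length u. d i * c i) \<in> F" using ya(2) sF by simp
  ultimately show "x \<in> spn (u @ [t])" unfolding spn_snoc by blast
qed

lemma rank_addv:
  assumes "\<And>i. i < length u \<Longrightarrow> c i \<in> F"
  shows "rank_over F (addv u t c @ [t]) = rank_over F (u @ [t])"
proof (rule rank_eq_of_spn)
  show "spn (addv u t c @ [t]) = spn (u @ [t])"
  proof
    show "spn (addv u t c @ [t]) \<subseteq> spn (u @ [t])" by (rule spn_addv_sub[OF assms])
    have "spn (addv (addv u t c) t (\<lambda>i. - c i) @ [t]) \<subseteq> spn (addv u t c @ [t])"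
      by (rule spn_addv_sub) (simp add: assms)
    then show "spn (u @ [t]) \<subseteq> spn (addv u t c @ [t])" by (simp add: addv_addv)
  qed
qed

lemma N_Astep0:
  assumes "w \<in> spn v"
  shows "N (v @ [w]) k a = card {(u, t). length u = length v \<and> rank_over F (u @ [t]) = k \<and> dot u v = a}"
proof -
  let ?n = "length v"
  obtain c where c: "c \<in> Cset ?n" "lin v c = w" using assms by (auto simp: spn_def)
  have cF: "\<And>i. i < ?n \<Longrightarrow> c i \<in> F" using c(1) Cset_mem by blast
  let ?P = "{(u, t). length u = ?n \<and> rank_over F (u @ [t]) = k \<and> dot u v + t * w = a}"
  let ?Q = "{(u, t). length u = ?n \<and> rank_over F (u @ [t]) = k \<and> dot u v = a}"
  let ?f = "\<lambda>(u, t). (addv u t (\<lambda>i. - c i), t)"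
  have key: "u = u'" if h: "addv u t (\<lambda>i. - c i) = addv u' t (\<lambda>i. - c i)" for u u' t
  proof -
    have "addv (addv u t (\<lambda>i. - c i)) t (\<lambda>i. - (- c i)) = addv (addv u' t (\<lambda>i. - c i)) t (\<lambda>i. - (- c i))"
      using h by simp
    then show "u = u'" by (simp only: addv_addv)
  qed
  have inj: "inj_on ?f ?Q" unfolding inj_on_def using key by auto
  have "?P = ?f ` ?Q"
  proof
    show "?f ` ?Q \<subseteq> ?P"
    proof
      fix x assume "x \<in> ?f ` ?Q"
      then obtain u t where H: "length u = ?n" "rank_over F (u @ [t]) = k" "dot u v = a"
        and x: "x = (addv u t (\<lambda>i. - c i), t)" by auto
      have "dot (addv u t (\<lambda>i. - c i)) v = dot u v + t * lin v (\<lambda>i. - c i)" by (rule dot_addv) (simp add: H)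
      also have "lin v (\<lambda>i. - c i) = - w" using c(2) by (simp add: lin_def sum_negf)
      finally have d: "dot (addv u t (\<lambda>i. - c i)) v + t * w = a" using H by simp
      have r: "rank_over F (addv u t (\<lambda>i. - c i) @ [t]) = k" using H cF by (subst rank_addv) auto
      show "x \<in> ?P" using d r H(1) x by simp
    qed
    show "?P \<subseteq> ?f ` ?Q"
    proof
      fix x assume "x \<in> ?P"
      then obtain u t where H: "length u = ?n" "rank_over F (u @ [t]) = k" "dot u v + t * w = a"
        and x: "x = (u, t)" by auto
      have "dot (addv u t c) v = dot u v + t * lin v c" by (rule dot_addv) (simp add: H)
      then have d: "dot (addv u t c) v = a" using H c(2) by simp
      have r: "rank_over F (addv u t c @ [t]) = k" using H cF by (subst rank_addv) auto
      have "(addv u t c, t) \<in> ?Q" using d r H by simp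
      moreover have "x = ?f (addv u t c, t)" using addv_addv[of u t c] x by simp
      ultimately show "x \<in> ?f ` ?Q" by (rule rev_image_eqI)
    qed
  qed
  then have "card ?P = card ?Q" using inj by (simp add: card_image)
  then show ?thesis by (simp add: N_snoc)
qed

lemma card_t:
  "real (card {t. rank_over F (u @ [t]) = k}) =
     (if rank_over F u = k then real q ^ k else 0) +
     (if Suc (rank_over F u) = k then real q ^ m - real q ^ rank_over F u else 0)"
proof -
  have rs: "\<And>t. rank_over F (u @ [t]) = rank_over F u + (if t \<in> spn u then 0 else 1)" by (rule rank_snoc)
  consider "rank_over F u = k" | "Suc (rank_over F u) = k" | "rank_over F u \<noteq> k \<and> Suc (rank_over F u) \<noteq> k" by blast
  then show ?thesis
  proof cases
    case 1
    then have "{t. rank_over F (u @ [t]) = k} = spn u" using rs by auto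
    then show ?thesis using 1 by (simp add: card_spn)
  next
    case 2
    then have "{t. rank_over F (u @ [t]) = k} = UNIV - spn u" using rs by auto
    moreover have "card (UNIV - spn u) = q ^ m - q ^ rank_over F u"
      by (simp add: card_Diff_subset cardU card_spn)
    moreover have "q ^ rank_over F u \<le> q ^ m"
      using card_mono[of "UNIV::'a set" "spn u"] by (simp add: cardU card_spn)
    ultimately show ?thesis using 2 by (simp add: of_nat_diff)
  next
    case 3
    then have "{t. rank_over F (u @ [t]) = k} = {}" using rs by auto
    then show ?thesis using 3 by simp
  qed
qed

lemma N_Astep:
  assumes "w \<in> spn v"
  shows "real (N (v @ [w]) k a) = real q ^ k * real (N v k a) +
     (if k = 0 then 0 else (real q ^ m - real q ^ (k - 1)) * real (N v (k - 1) a))"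
proof -
  let ?S = "{u. length u = length v \<and> dot u v = a}"
  have finS: "finite ?S" by (rule finite_subset[OF _ finite_len[of "length v"]]) auto
  have P0: "{(u, t). length u = length v \<and> rank_over F (u @ [t]) = k \<and> dot u v = a} =
      Sigma ?S (\<lambda>u. {t. rank_over F (u @ [t]) = k})" by auto
  have "real (N (v @ [w]) k a) = real (\<Sum>u\<in>?S. card {t. rank_over F (u @ [t]) = k})"
    unfolding N_Astep0[OF assms] P0 using finS by (subst card_SigmaI) auto
  also have "\<dots> = (\<Sum>u\<in>?S. real (card {t. rank_over F (u @ [t]) = k}))" by simp
  also have "\<dots> = (\<Sum>u\<in>?S. (if rank_over F u = k then real q ^ k else 0) +
     (if Suc (rank_over F u) = k then real q ^ m - real q ^ (k - 1) else 0))"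
    by (rule sum.cong[OF refl]) (auto simp: card_t)
  also have "\<dots> = (\<Sum>u\<in>?S. if rank_over F u = k then real q ^ k else 0) +
     (\<Sum>u\<in>?S. if Suc (rank_over F u) = k then real q ^ m - real q ^ (k - 1) else 0)"
    by (rule sum.distrib)
  also have "(\<Sum>u\<in>?S. if rank_over F u = k then real q ^ k else 0) = real q ^ k * real (N v k a)"
  proof -
    have "(\<Sum>u\<in>?S. if rank_over F u = k then real q ^ k else 0) = (\<Sum>u\<in>{u \<in> ?S. rank_over F u = k}. real q ^ k)"
      using sum.inter_filter[OF finS, of "\<lambda>_. real q ^ k" "\<lambda>u. rank_over F u = k"] by simp
    also have "{u \<in> ?S. rank_over F u = k} = Nset v k a" by (auto simp: Nset_def)
    finally show ?thesis by (simp add: N_def)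
  qed
  also have "(\<Sum>u\<in>?S. if Suc (rank_over F u) = k then real q ^ m - real q ^ (k - 1) else 0) =
      (if k = 0 then 0 else (real q ^ m - real q ^ (k - 1)) * real (N v (k - 1) a))"
  proof (cases k)
    case 0 then show ?thesis by simp
  next
    case (Suc j)
    have "(\<Sum>u\<in>?S. if Suc (rank_over F u) = k then real q ^ m - real q ^ (k - 1) else 0) =
        (\<Sum>u\<in>{u \<in> ?S. rank_over F u = j}. real q ^ m - real q ^ (k - 1))"
      using sum.inter_filter[OF finS, of "\<lambda>_. real q ^ m - real q ^ (k - 1)" "\<lambda>u. rank_over F u = j"] Suc by simp
    also have "{u \<in> ?S. rank_over F u = j} = Nset v j a" by (auto simp: Nset_def)
    finally show ?thesis using Suc by (simp add: N_def mult.commute)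
  qed
  finally show ?thesis .
qed

lemma D_Astep:
  assumes "w \<in> spn v"
  shows "D (v @ [w]) k = real q ^ k * D v k +
     (if k = 0 then 0 else (real q ^ m - real q ^ (k - 1)) * D v (k - 1))"
  unfolding D_def N_Astep[OF assms] by (simp add: algebra_simps)


definition Yc :: "'a list \<Rightarrow> 'a \<Rightarrow> nat \<Rightarrow> 'a \<Rightarrow> nat" where
  "Yc v w j a = card {u. length u = length v \<and> rank_over F u = j \<and> (a - dot u v) / w \<in> spn u}"

lemma indep_snoc_facts:
  assumes "rank_over F (v @ [w]) = Suc (length v)"
  shows "w \<notin> spn v" "rank_over F v = length v" "w \<noteq> 0"
proof -
  have e: "rank_over F v + (if w \<in> spn v then 0 else 1) = Suc (length v)"
    using assms by (simp only: rank_snoc)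
  show ws: "w \<notin> spn v"
  proof
    assume "w \<in> spn v"
    then have "rank_over F v = Suc (length v)" using e by simp
    then show False using rank_le[of v] by simp
  qed
  show "rank_over F v = length v" using e ws by simp
  show "w \<noteq> 0" using ws spn_0[of v] by auto
qed

lemma N_Bform:
  assumes "w \<noteq> 0"
  shows "N (v @ [w]) k a = card {u. length u = length v \<and> rank_over F (u @ [(a - dot u v) / w]) = k}"
proof -
  let ?P = "{(u, t). length u = length v \<and> rank_over F (u @ [t]) = k \<and> dot u v + t * w = a}"
  let ?S = "{u. length u = length v \<and> rank_over F (u @ [(a - dot u v) / w]) = k}"
  let ?g = "\<lambda>u. (u, (a - dot u v) / w)"
  have inj: "inj_on ?g ?S" by (auto simp: inj_on_def)
  have eq: "dot u v + t * w = a \<longleftrightarrow> t = (a - dot u v) / w" for u t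
    using assms by (auto simp: field_simps)
  have "?P = ?g ` ?S"
  proof
    show "?P \<subseteq> ?g ` ?S"
    proof
      fix x assume "x \<in> ?P"
      then obtain u t where H: "length u = length v" "rank_over F (u @ [t]) = k" "dot u v + t * w = a"
        and x: "x = (u, t)" by auto
      have t: "t = (a - dot u v) / w" using H(3) eq by blast
      have "u \<in> ?S" using H t by simp
      moreover have "x = ?g u" using x t by simp
      ultimately show "x \<in> ?g ` ?S" by (rule rev_image_eqI)
    qed
    show "?g ` ?S \<subseteq> ?P"
    proof
      fix x assume "x \<in> ?g ` ?S"
      then obtain u where H: "length u = length v" "rank_over F (u @ [(a - dot u v) / w]) = k"
        and x: "x = ?g u" by auto
      have "dot u v + (a - dot u v) / w * w = a" using eq by blast
      then show "x \<in> ?P" using H x by simp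
    qed
  qed
  then have "card ?P = card ?S" using inj by (simp add: card_image)
  then show ?thesis by (simp add: N_snoc)
qed

lemma N_Bcount:
  assumes "w \<noteq> 0"
  shows "real (N (v @ [w]) k a) = real (Yc v w k a) +
    (if k = 0 then 0 else real (T (length v) (k - 1)) - real (Yc v w (k - 1) a))"
proof -
  let ?n = "length v"
  let ?A = "\<lambda>j. {u. length u = ?n \<and> rank_over F u = j \<and> (a - dot u v) / w \<in> spn u}"
  let ?B = "\<lambda>j. {u. length u = ?n \<and> rank_over F u = j \<and> (a - dot u v) / w \<notin> spn u}"
  have finA: "finite (?A j)" for j by (rule finite_subset[OF _ finite_len[of ?n]]) auto
  have finB: "finite (?B j)" for j by (rule finite_subset[OF _ finite_len[of ?n]]) auto
  have cardB: "real (card (?B j)) = real (T ?n j) - real (Yc v w j a)" for j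
  proof -
    have "Tset ?n j = ?A j \<union> ?B j" by (auto simp: Tset_def)
    moreover have "?A j \<inter> ?B j = {}" by auto
    ultimately have "card (Tset ?n j) = card (?A j) + card (?B j)" using finA finB by (simp add: card_Un_disjoint)
    then show ?thesis by (simp add: T_def Yc_def)
  qed
  have split: "{u. length u = ?n \<and> rank_over F (u @ [(a - dot u v) / w]) = k} =
     ?A k \<union> {u. length u = ?n \<and> Suc (rank_over F u) = k \<and> (a - dot u v) / w \<notin> spn u}"
    by (auto simp: rank_snoc)
  have finC: "finite {u. length u = ?n \<and> Suc (rank_over F u) = k \<and> (a - dot u v) / w \<notin> spn u}"
    by (rule finite_subset[OF _ finite_len[of ?n]]) auto
  have "N (v @ [w]) k a = card (?A k) + card {u. length u = ?n \<and> Suc (rank_over F u) = k \<and> (a - dot u v) / w \<notin> spn u}"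
    unfolding N_Bform[OF assms] split using finA finC by (subst card_Un_disjoint) auto
  moreover have "real (card {u. length u = ?n \<and> Suc (rank_over F u) = k \<and> (a - dot u v) / w \<notin> spn u}) =
     (if k = 0 then 0 else real (T ?n (k - 1)) - real (Yc v w (k - 1) a))"
  proof (cases k)
    case 0 then show ?thesis by simp
  next
    case (Suc j)
    then have "{u. length u = ?n \<and> Suc (rank_over F u) = k \<and> (a - dot u v) / w \<notin> spn u} = ?B j" by auto
    then show ?thesis using cardB[of j] Suc by simp
  qed
  ultimately show ?thesis by (simp add: Yc_def)
qed

lemma card_filter_sum: "finite B \<Longrightarrow> card {b \<in> B. P b} = (\<Sum>b\<in>B. if P b then 1 else 0)"
  by (subst card_eq_sum) (rule sum.inter_filter)

lemma card_swap:
  assumes "finite A" "finite B"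
  shows "(\<Sum>x\<in>A. card {y \<in> B. P x y}) = (\<Sum>y\<in>B. card {x \<in> A. P x y})"
proof -
  have "(\<Sum>x\<in>A. card {y \<in> B. P x y}) = (\<Sum>x\<in>A. \<Sum>y\<in>B. if P x y then 1 else 0)"
    using assms by (simp add: card_filter_sum)
  also have "\<dots> = (\<Sum>y\<in>B. \<Sum>x\<in>A. if P x y then 1 else 0)" by (rule sum.swap)
  also have "\<dots> = (\<Sum>y\<in>B. card {x \<in> A. P x y})" using assms by (simp add: card_filter_sum)
  finally show ?thesis .
qed

lemma Y_sum:
  assumes "w \<noteq> 0"
  shows "q ^ (length v - j) * Yc v w j a = (\<Sum>c\<in>Cset (length v). N (addv v w c) j a)"
proof -
  let ?n = "length v"
  let ?U = "Tset ?n j"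
  have "(\<Sum>c\<in>Cset ?n. N (addv v w c) j a) = (\<Sum>c\<in>Cset ?n. card {u \<in> ?U. dot u (addv v w c) = a})"
  proof (rule sum.cong[OF refl])
    fix c show "N (addv v w c) j a = card {u \<in> ?U. dot u (addv v w c) = a}"
      unfolding N_def Nset_def Tset_def by (rule arg_cong[where f=card]) auto
  qed
  also have "\<dots> = (\<Sum>u\<in>?U. card {c \<in> Cset ?n. dot u (addv v w c) = a})"
    by (rule card_swap) auto
  also have "\<dots> = (\<Sum>u\<in>?U. if (a - dot u v) / w \<in> spn u then q ^ (?n - j) else 0)"
  proof (rule sum.cong[OF refl])
    fix u assume u: "u \<in> ?U"
    then have lu: "length u = ?n" and ru: "rank_over F u = j" by (auto simp: Tset_def)
    have "{c \<in> Cset ?n. dot u (addv v w c) = a} = {c \<in> Cset (length u). lin u c = (a - dot u v) / w}"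
      using assms lu by (auto simp: dot_addv2 field_simps)
    also have "card \<dots> = (if (a - dot u v) / w \<in> spn u then q ^ (?n - j) else 0)"
    proof (cases "(a - dot u v) / w \<in> spn u")
      case True then show ?thesis using fib_card[OF True] lu ru by simp
    next
      case False
      have "{c \<in> Cset (length u). lin u c = (a - dot u v) / w} = {}"
      proof (rule equals0I)
        fix c assume "c \<in> {c \<in> Cset (length u). lin u c = (a - dot u v) / w}"
        then have "c \<in> Cset (length u)" "lin u c = (a - dot u v) / w" by auto
        then show False using False lin_in_spn[of c u] by simp
      qed
      then show ?thesis using False by simp
    qed
    finally show "card {c \<in> Cset ?n. dot u (addv v w c) = a} = (if (a - dot u v) / w \<in> spn u then q ^ (?n - j) else 0)" .
  qed
  also have "\<dots> = q ^ (?n - j) * card {u \<in> ?U. (a - dot u v) / w \<in> spn u}"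
    unfolding card_filter_sum[OF finite_Tset] sum_distrib_left by (rule sum.cong) auto
  also have "{u \<in> ?U. (a - dot u v) / w \<in> spn u} = {u. length u = length v \<and> rank_over F u = j \<and> (a - dot u v) / w \<in> spn u}"
    by (auto simp: Tset_def)
  finally show ?thesis by (simp add: Yc_def)
qed

lemma Yd:
  assumes "w \<noteq> 0" and hyp: "\<And>c. c \<in> Cset (length v) \<Longrightarrow> D (addv v w c) j = D v j"
  shows "real (Yc v w j 0) - real (Yc v w j 1) = real q ^ j * D v j"
proof (cases "j \<le> length v")
  case True
  let ?n = "length v"
  have "real q ^ (?n - j) * (real (Yc v w j 0) - real (Yc v w j 1)) =
     real (q ^ (?n - j) * Yc v w j 0) - real (q ^ (?n - j) * Yc v w j 1)"
    by (simp add: algebra_simps)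
  also have "\<dots> = (\<Sum>c\<in>Cset ?n. D (addv v w c) j)"
    unfolding Y_sum[OF assms(1)] D_def by (simp add: sum_subtractf)
  also have "\<dots> = (\<Sum>c\<in>Cset ?n. D v j)" by (rule sum.cong[OF refl]) (rule hyp)
  also have "\<dots> = real q ^ ?n * D v j" by (simp add: card_Cset)
  also have "\<dots> = real q ^ (?n - j) * (real q ^ j * D v j)"
    using True by (simp add: power_add[symmetric] mult.assoc)
  finally show ?thesis using qpos by simp
next
  case False
  have "Yc v w j a = 0" for a
  proof -
    have "{u. length u = length v \<and> rank_over F u = j \<and> (a - dot u v) / w \<in> spn u} = {}"
    proof (rule equals0I)
      fix u assume "u \<in> {u. length u = length v \<and> rank_over F u = j \<and> (a - dot u v) / w \<in> spn u}"
      then show False using False rank_le[of u] by simp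
    qed
    then show ?thesis by (simp add: Yc_def)
  qed
  moreover have "N v j a = 0" for a
  proof -
    have "Nset v j a = {}"
    proof (rule equals0I)
      fix u assume "u \<in> Nset v j a"
      then show False using False rank_le[of u] by (simp add: Nset_def)
    qed
    then show ?thesis by (simp add: N_def)
  qed
  ultimately show ?thesis by (simp add: D_def)
qed

lemma D_Bstep:
  assumes ind: "rank_over F (v @ [w]) = Suc (length v)"
    and hyp: "\<And>c j. c \<in> Cset (length v) \<Longrightarrow> D (addv v w c) j = D v j"
  shows "D (v @ [w]) k = real q ^ k * D v k - (if k = 0 then 0 else real q ^ (k - 1) * D v (k - 1))"
proof -
  have w: "w \<noteq> 0" using indep_snoc_facts[OF ind] by simp
  have "D (v @ [w]) k = (real (Yc v w k 0) - real (Yc v w k 1)) -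
      (if k = 0 then 0 else real (Yc v w (k - 1) 0) - real (Yc v w (k - 1) 1))"
    unfolding D_def N_Bcount[OF w] by simp
  also have "\<dots> = real q ^ k * D v k - (if k = 0 then 0 else real q ^ (k - 1) * D v (k - 1))"
    using Yd[OF w hyp] by simp
  finally show ?thesis .
qed

lemma rank_addv_indep:
  assumes ind: "rank_over F (v @ [w]) = Suc (length v)" and c: "c \<in> Cset (length v)"
  shows "rank_over F (addv v w c) = length v"
proof -
  let ?n = "length v"
  have ind': "lin_indep_over F {..<Suc ?n} (v @ [w])" using ind indep_iff[of "v @ [w]"] by simp
  have "lin_indep_over F {..<?n} (addv v w c)"
    unfolding lin_indep_over_def
  proof (intro allI impI)
    fix d assume H: "(\<forall>i\<in>{..<?n}. d i \<in> F) \<and> (\<Sum>i\<in>{..<?n}. d i * addv v w c ! i) = 0"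
    define d' where "d' i = (if i < ?n then d i else (\<Sum>i<?n. d i * c i))" for i
    have sF: "(\<Sum>i<?n. d i * c i) \<in> F"
      by (rule Fsum) (use H c Cset_mem in auto)
    have dF: "\<forall>i\<in>{..<Suc ?n}. d' i \<in> F" using H sF by (auto simp: d'_def)
    have s1: "(\<Sum>i<?n. d' i * (v @ [w]) ! i) = (\<Sum>i<?n. d i * v ! i)"
      by (rule sum.cong) (auto simp: d'_def nth_append)
    have s2: "(\<Sum>i<?n. d i * addv v w c ! i) = (\<Sum>i<?n. d i * v ! i) + w * (\<Sum>i<?n. d i * c i)"
    proof -
      have "(\<Sum>i<?n. d i * addv v w c ! i) = (\<Sum>i<?n. d i * v ! i + w * (d i * c i))"
        by (rule sum.cong) (auto simp: algebra_simps)
      then show ?thesis by (simp add: sum.distrib sum_distrib_left)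
    qed
    have "(\<Sum>i\<in>{..<Suc ?n}. d' i * (v @ [w]) ! i) = (\<Sum>i<?n. d i * v ! i) + (\<Sum>i<?n. d i * c i) * w"
      using s1 by (simp add: d'_def)
    also have "\<dots> = 0" using H s2 by (simp add: mult.commute)
    finally have z: "\<forall>i\<in>{..<Suc ?n}. d' i = 0" using ind' dF unfolding lin_indep_over_def by blast
    show "\<forall>i\<in>{..<?n}. d i = 0"
    proof
      fix i assume i: "i \<in> {..<?n}"
      then have "d' i = 0" using z by simp
      then show "d i = 0" using i by (simp add: d'_def)
    qed
  qed
  then show ?thesis using indep_iff[of "addv v w c"] by simp
qed

lemma N_permute:
  assumes "invol p (length v)"
  shows "N (permute p v) k a = N v k a"
proof -
  have inj: "inj_on (permute p) (Nset v k a)"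
  proof (rule inj_onI)
    fix x y assume "x \<in> Nset v k a" "y \<in> Nset v k a" and e: "permute p x = permute p y"
    then have "invol p (length x)" "invol p (length y)" using assms by (auto simp: Nset_def)
    then show "x = y" using e permute_permute by metis
  qed
  have "Nset (permute p v) k a = permute p ` Nset v k a"
  proof
    show "Nset (permute p v) k a \<subseteq> permute p ` Nset v k a"
    proof
      fix x assume x: "x \<in> Nset (permute p v) k a"
      then have lx: "length x = length v" by (simp add: Nset_def)
      have ix: "invol p (length x)" using lx assms by simp
      have "permute p x \<in> Nset v k a"
      proof -
        have "dot (permute p x) v = dot (permute p x) (permute p (permute p v))"
          using permute_permute[OF assms] by simp
        also have "\<dots> = dot x (permute p v)" by (rule dot_permute) (use assms lx in simp_all)
        finally show ?thesis using x lx rank_permute[OF ix] by (simp add: Nset_def)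
      qed
      moreover have "x = permute p (permute p x)" using permute_permute[OF ix] by simp
      ultimately show "x \<in> permute p ` Nset v k a" by (rule rev_image_eqI)
    qed
    show "permute p ` Nset v k a \<subseteq> Nset (permute p v) k a"
    proof
      fix x assume "x \<in> permute p ` Nset v k a"
      then obtain u where u: "u \<in> Nset v k a" "x = permute p u" by auto
      then have lu: "length u = length v" by (simp add: Nset_def)
      have "dot (permute p u) (permute p v) = dot u v" by (rule dot_permute) (use assms lu in simp_all)
      then show "x \<in> Nset (permute p v) k a" using u lu rank_permute[of p u] assms by (simp add: Nset_def)
    qed
  qed
  then show ?thesis using inj by (simp add: N_def card_image)
qed

lemma D_permute: "invol p (length v) \<Longrightarrow> D (permute p v) k = D v k"
  by (simp add: D_def N_permute)

lemma last_dep: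
  assumes "length x = Suc n" "\<forall>k<Suc n. e k \<in> F" "(\<Sum>k<Suc n. e k * x ! k) = 0" "e n \<noteq> 0"
  shows "x ! n \<in> spn (take n x)"
proof -
  have s: "(\<Sum>k<n. e k * x ! k) + e n * x ! n = 0" using assms(3) by simp
  have "x ! n = - (\<Sum>k<n. e k * x ! k) / e n" using s assms(4) by (simp add: field_simps eq_neg_iff_add_eq_0)
  also have "\<dots> = (\<Sum>k<n. (- e k / e n) * x ! k)"
    by (simp add: sum_divide_distrib[symmetric] sum_negf[symmetric] divide_inverse mult_ac sum_distrib_left)
  also have "\<dots> = lin (take n x) (restrict (\<lambda>k. - e k / e n) {..<n})"
    unfolding lin_def using assms(1) by (intro sum.cong) auto
  finally have xe: "x ! n = lin (take n x) (restrict (\<lambda>k. - e k / e n) {..<n})" .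
  have lt: "length (take n x) = n" using assms(1) by simp
  have "restrict (\<lambda>k. - e k / e n) {..<n} \<in> Cset (length (take n x))"
    unfolding lt by (rule Cset_restrict) (use assms(2) in auto)
  then show ?thesis unfolding spn_def using xe by blast
qed

lemma exists_dep:
  assumes "length v = Suc n" "rank_over F v \<noteq> Suc n"
  shows "\<exists>p. invol p (Suc n) \<and> permute p v ! n \<in> spn (take n (permute p v))"
proof -
  have "\<not> lin_indep_over F {..<Suc n} v" using assms indep_iff[of v] by simp
  then obtain d i0 where d: "\<forall>i\<in>{..<Suc n}. d i \<in> F" "(\<Sum>i\<in>{..<Suc n}. d i * v ! i) = 0"
    and i0: "i0 < Suc n" "d i0 \<noteq> 0" unfolding lin_indep_over_def by blast
  define p where "p k = (if k = i0 then n else if k = n then i0 else k)" for k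
  have inv: "invol p (Suc n)" using i0 by (auto simp: invol_def p_def)
  let ?v2 = "permute p v"
  have "(\<Sum>k<Suc n. d (p k) * ?v2 ! k) = (\<Sum>k<Suc n. (\<lambda>k. d k * v ! k) (p k))"
    using assms(1) by (intro sum.cong) auto
  also have "\<dots> = 0" using sum_perm[OF inv, of "\<lambda>k. d k * v ! k"] d(2) by simp
  finally have s: "(\<Sum>k<Suc n. d (p k) * ?v2 ! k) = 0" .
  have pn: "p n = i0" by (simp add: p_def)
  have "\<forall>k<Suc n. d (p k) \<in> F" using d(1) inv by (auto simp: invol_def)
  then have "?v2 ! n \<in> spn (take n ?v2)"
    using last_dep[of ?v2 n "\<lambda>k. d (p k)"] assms(1) s pn i0 by simp
  then show ?thesis using inv by blast
qed


lemma powi_id: "real q ^ j * (real q powi (int m - int j) - 1) = real q ^ m - real q ^ j"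
proof -
  have "real q powi (int m - int j) = real q ^ m / real q ^ j" using qpos by (simp add: power_int_diff)
  then show ?thesis using qpos by (simp add: field_simps)
qed

lemma A_coeff:
  "hcoeff (qprod q P (poly_A q)) k (int m) = real q ^ k * hcoeff P k (int m) +
     (if k = 0 then 0 else (real q ^ m - real q ^ (k - 1)) * hcoeff P (k - 1) (int m))"
proof (cases k)
  case 0 then show ?thesis by (simp add: hcoeff_qprod_A)
next
  case (Suc j)
  have h: "hcoeff (qprod q P (poly_A q)) k (int m) = real q ^ k * hcoeff P k (int m) +
      real q ^ j * hcoeff P j (int m) * (real q powi (int m - int j) - 1)"
    using Suc by (simp add: hcoeff_qprod_A)
  have e: "real q ^ j * hcoeff P j (int m) * (real q powi (int m - int j) - 1) =
      (real q ^ j * (real q powi (int m - int j) - 1)) * hcoeff P j (int m)"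
    by (simp only: mult_ac)
  show ?thesis unfolding h e powi_id using Suc by simp
qed

lemma main:
  "length v = n \<Longrightarrow> D v k = hcoeff (qprod q (qpow q poly_B (rank_over F v))
       (qpow q (poly_A q) (n - rank_over F v))) k (int m)"
proof (induction n arbitrary: v k)
  case 0
  then have v: "v = []" by simp
  have r: "rank_over F [] = 0" using rank_le[of "[]"] by simp
  have "Nset [] k a = (if k = 0 \<and> a = 0 then {[]} else {})" for a
    by (auto simp: Nset_def dot_def r)
  then have "D [] k = (if k = 0 then 1 else 0)" by (simp add: D_def N_def)
  then show ?case using v r by (simp add: hcoeff_qprod_unit_left hcoeff_unit)
next
  case (Suc n)
  let ?v' = "take n v" and ?w = "v ! n"
  have ve: "?v' @ [?w] = v" using take_Suc_conv_app_nth[of n v] Suc.prems by simp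
  have lv': "length ?v' = n" using Suc.prems by simp
  show ?case
  proof (cases "rank_over F v = Suc n")
    case True
    have ind: "rank_over F (?v' @ [?w]) = Suc (length ?v')" using True ve lv' by simp
    have rv': "rank_over F ?v' = n" using indep_snoc_facts(2)[OF ind] lv' by simp
    have IHv': "D ?v' j = hcoeff (qpow q poly_B n) j (int m)" for j
      using Suc.IH[OF lv', of j] rv' by (simp add: hcoeff_qprod_unit_right)
    have hyp: "D (addv ?v' ?w c) j = D ?v' j" if c: "c \<in> Cset (length ?v')" for c j
    proof -
      have "rank_over F (addv ?v' ?w c) = n" using rank_addv_indep[OF ind c] lv' by simp
      moreover have "length (addv ?v' ?w c) = n" using lv' by simp
      ultimately show ?thesis using Suc.IH[of "addv ?v' ?w c" j] IHv'[of j]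
        by (simp add: hcoeff_qprod_unit_right)
    qed
    have "D v k = D (?v' @ [?w]) k" using ve by simp
    also have "\<dots> = real q ^ k * D ?v' k - (if k = 0 then 0 else real q ^ (k - 1) * D ?v' (k - 1))"
      by (rule D_Bstep[OF ind hyp])
    also have "\<dots> = hcoeff (qprod q (qpow q poly_B n) poly_B) k (int m)"
      unfolding hcoeff_qprod_B IHv' by simp
    also have "\<dots> = hcoeff (qprod q (qpow q poly_B (Suc n)) (qpow q (poly_A q) 0)) k (int m)"
      by (simp add: hcoeff_qprod_unit_right)
    finally show ?thesis using True by simp
  next
    case False
    obtain p where p: "invol p (Suc n)" "permute p v ! n \<in> spn (take n (permute p v))"
      using exists_dep[OF Suc.prems False] by blast
    let ?v2 = "permute p v"
    have l2: "length ?v2 = Suc n" using Suc.prems by simp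
    let ?u = "take n ?v2" and ?z = "?v2 ! n"
    have ve2: "?u @ [?z] = ?v2" using take_Suc_conv_app_nth[of n ?v2] l2 by simp
    have lu: "length ?u = n" using l2 by simp
    have ip: "invol p (length v)" using p(1) Suc.prems by simp
    have r2: "rank_over F ?v2 = rank_over F v" by (rule rank_permute[OF ip])
    have "rank_over F (?u @ [?z]) = rank_over F ?u" using rank_snoc[of ?u ?z] p(2) by simp
    then have ru: "rank_over F ?u = rank_over F v" using ve2 r2 by simp
    define r where "r = rank_over F v"
    have rle: "r \<le> n" using rank_le[of ?u] lu ru r_def by simp
    have IHu: "D ?u j = hcoeff (qprod q (qpow q poly_B r) (qpow q (poly_A q) (n - r))) j (int m)" for j
      using Suc.IH[OF lu, of j] ru r_def by simp
    have "D v k = D ?v2 k" using D_permute[OF ip] by simp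
    also have "\<dots> = D (?u @ [?z]) k" using ve2 by simp
    also have "\<dots> = real q ^ k * D ?u k + (if k = 0 then 0 else (real q ^ m - real q ^ (k - 1)) * D ?u (k - 1))"
      by (rule D_Astep[OF p(2)])
    also have "\<dots> = hcoeff (qprod q (qprod q (qpow q poly_B r) (qpow q (poly_A q) (n - r))) (poly_A q)) k (int m)"
      unfolding A_coeff IHu by simp
    also have "\<dots> = hcoeff (qprod q (qpow q poly_B r) (qprod q (qpow q (poly_A q) (n - r)) (poly_A q))) k (int m)"
      by (rule qprod_assoc)
    also have "\<dots> = hcoeff (qprod q (qpow q poly_B r) (qpow q (poly_A q) (Suc n - r))) k (int m)"
      using rle by (simp add: Suc_diff_le)
    finally show ?thesis using r_def by simp
  qed
qed

lemma dot_scale: "length u = length v \<Longrightarrow> dot (map ((*) c) u) v = c * dot u v"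
proof -
  assume l: "length u = length v"
  have "dot (map ((*) c) u) v = (\<Sum>i<length v. c * (u ! i * v ! i))"
    unfolding dot_def by (rule sum.cong) (auto simp: l mult_ac)
  then show ?thesis by (simp add: dot_def sum_distrib_left)
qed

lemma N_scale:
  assumes a: "a \<noteq> 0"
  shows "N v k a = N v k 1"
proof -
  have inj: "inj_on (map ((*) a)) (Nset v k 1)"
  proof (rule inj_onI)
    fix x y assume "map ((*) a) x = map ((*) a) y"
    moreover have "inj_on ((*) a) (set x \<union> set y)" using a by (simp add: inj_on_def)
    ultimately show "x = y" by (rule map_inj_on)
  qed
  have "Nset v k a = map ((*) a) ` Nset v k 1"
  proof
    show "Nset v k a \<subseteq> map ((*) a) ` Nset v k 1"
    proof
      fix x assume x: "x \<in> Nset v k a"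
      let ?y = "map ((*) (inverse a)) x"
      have lx: "length x = length v" using x by (simp add: Nset_def)
      have "rank_over F ?y = k" using x a rank_scale[of "inverse a" x] by (simp add: Nset_def)
      moreover have "dot ?y v = 1" using x a dot_scale[OF lx, of "inverse a"] by (simp add: Nset_def)
      ultimately have "?y \<in> Nset v k 1" using lx by (simp add: Nset_def)
      moreover have "x = map ((*) a) ?y" using a by (simp add: map_idI)
      ultimately show "x \<in> map ((*) a) ` Nset v k 1" by (rule rev_image_eqI)
    qed
    show "map ((*) a) ` Nset v k 1 \<subseteq> Nset v k a"
    proof
      fix x assume "x \<in> map ((*) a) ` Nset v k 1"
      then obtain y where y: "y \<in> Nset v k 1" "x = map ((*) a) y" by auto
      then have ly: "length y = length v" by (simp add: Nset_def)
      show "x \<in> Nset v k a" using y a rank_scale[of a y] dot_scale[OF ly, of a] ly by (simp add: Nset_def)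
    qed
  qed
  then show ?thesis using inj by (simp add: N_def card_image)
qed

lemma N_total: "(\<Sum>a\<in>UNIV. N v k a) = T (length v) k"
proof -
  have "(\<Sum>a\<in>UNIV. \<Sum>u\<in>{u. u \<in> Tset (length v) k \<and> dot u v = a}. (1::nat)) = (\<Sum>u\<in>Tset (length v) k. 1)"
    by (rule sum.group) auto
  moreover have "{u. u \<in> Tset (length v) k \<and> dot u v = a} = Nset v k a" for a
    by (auto simp: Tset_def Nset_def)
  ultimately show ?thesis by (simp add: N_def T_def)
qed

lemma key: "real q ^ m * real (N v k 0) = real (T (length v) k) + (real q ^ m - 1) * D v k"
proof -
  have "T (length v) k = N v k 0 + (\<Sum>a\<in>UNIV - {0}. N v k a)"
    unfolding N_total[symmetric] by (rule sum.remove) auto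
  also have "(\<Sum>a\<in>UNIV - {0}. N v k a) = (\<Sum>a\<in>UNIV - {0::'a}. N v k 1)"
  proof (rule sum.cong)
    fix a assume "a \<in> UNIV - {0::'a}"
    then show "N v k a = N v k 1" by (intro N_scale) simp
  qed simp
  also have "\<dots> = (q ^ m - 1) * N v k 1" by (simp add: card_Diff_subset cardU)
  finally have "real (T (length v) k) = real (N v k 0) + (real q ^ m - 1) * real (N v k 1)"
    using qpos by (simp add: of_nat_diff)
  then show ?thesis by (simp add: D_def algebra_simps)
qed

lemma rank_zero: "rank_over F (replicate n 0) = 0"
proof -
  have "lin (replicate n 0) c = 0" for c unfolding lin_def by (rule sum.neutral) auto
  moreover have "restrict (\<lambda>_. 0) {..<n} \<in> Cset n" by (rule Cset_restrict) simp
  ultimately have "spn (replicate n 0) = {0}" unfolding spn_def by auto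
  then have "q ^ rank_over F (replicate n 0) = q ^ 0" using card_spn[of "replicate n 0"] by simp
  then show ?thesis by (rule pow_inj)
qed

lemma T_eq: "real (T n k) = hcoeff (qpow q (poly_A q) n) k (int m)"
proof -
  have d0: "dot u (replicate n 0) = 0" for u unfolding dot_def by (rule sum.neutral) auto
  have "Nset (replicate n 0) k 0 = Tset n k" by (auto simp: Nset_def Tset_def d0)
  moreover have "Nset (replicate n 0) k 1 = {}" by (auto simp: Nset_def d0)
  ultimately have "D (replicate n 0) k = real (T n k)" by (simp add: D_def N_def T_def)
  then show ?thesis using main[of "replicate n 0" n k] rank_zero[of n] by (simp add: hcoeff_qprod_unit_left)
qed

end

theorem proposition16:
  fixes F :: "'a::{finite,field} set" and q m n r :: nat and v :: "'a list"
  assumes "is_subfield F" and "card F = q" and "card (UNIV :: 'a set) = q ^ m"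
    and "length v = n" and "rank_over F v = r"
  shows "\<forall>x y. rank_weight_enum F n (dual_span v) x y =
    (1 / real q ^ m) *
      (heval (qpow q (poly_A q) n) (int m) x y
       + (real q ^ m - 1) * heval (qprod q (qpow q poly_B r) (qpow q (poly_A q) (n - r))) (int m) x y)"
proof (intro allI)
  fix x y :: real
  interpret S: setting F q m using assms(1-3) by unfold_locales
  have rle: "r \<le> n" using S.rank_le[of v] assms(4,5) by simp
  let ?f = "\<lambda>k. y ^ k * x ^ (n - k)"
  have Qpos: "real q ^ m > 0" using S.qpos by simp
  have ds: "dual_span v = {u. length u = n \<and> S.dot u v = 0}"
    using assms(4) by (simp add: dual_span_def S.dot_def)
  have finds: "finite (dual_span v)" unfolding ds
    by (rule finite_subset[OF _ S.finite_len[of n]]) auto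
  have L: "rank_weight_enum F n (dual_span v) x y = (\<Sum>k=0..n. real (S.N v k 0) * ?f k)"
  proof -
    have "rank_weight_enum F n (dual_span v) x y = (\<Sum>u\<in>dual_span v. ?f (rank_over F u))"
      by (simp add: rank_weight_enum_def)
    also have "\<dots> = (\<Sum>k\<in>{0..n}. \<Sum>u\<in>{u. u \<in> dual_span v \<and> rank_over F u = k}. ?f (rank_over F u))"
      using finds S.rank_le ds by (intro sum.group[symmetric]) auto
    also have "\<dots> = (\<Sum>k\<in>{0..n}. real (S.N v k 0) * ?f k)"
    proof (rule sum.cong[OF refl])
      fix k
      have "{u. u \<in> dual_span v \<and> rank_over F u = k} = S.Nset v k 0"
        unfolding ds S.Nset_def using assms(4) by auto
      moreover have "(\<Sum>u\<in>S.Nset v k 0. ?f (rank_over F u)) = (\<Sum>u\<in>S.Nset v k 0. ?f k)"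
        by (rule sum.cong) (auto simp: S.Nset_def)
      ultimately show "(\<Sum>u\<in>{u. u \<in> dual_span v \<and> rank_over F u = k}. ?f (rank_over F u)) = real (S.N v k 0) * ?f k"
        by (simp add: S.N_def)
    qed
    finally show ?thesis .
  qed
  have R1: "heval (qpow q (poly_A q) n) (int m) x y = (\<Sum>k=0..n. real (S.T n k) * ?f k)"
    unfolding heval_def by (simp add: S.T_eq mult.assoc)
  have R2: "heval (qprod q (qpow q poly_B r) (qpow q (poly_A q) (n - r))) (int m) x y = (\<Sum>k=0..n. S.D v k * ?f k)"
    unfolding heval_def using rle S.main[OF assms(4)] assms(5) by (simp add: mult.assoc)
  let ?Q = "real q ^ m"
  have "(1 / ?Q) * ((\<Sum>k=0..n. real (S.T n k) * ?f k) + (?Q - 1) * (\<Sum>k=0..n. S.D v k * ?f k))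
      = (1 / ?Q) * ((\<Sum>k=0..n. real (S.T n k) * ?f k) + (\<Sum>k=0..n. (?Q - 1) * (S.D v k * ?f k)))"
    by (simp only: sum_distrib_left)
  also have "\<dots> = (1 / ?Q) * (\<Sum>k=0..n. real (S.T n k) * ?f k + (?Q - 1) * (S.D v k * ?f k))"
    by (simp only: sum.distrib)
  also have "\<dots> = (\<Sum>k=0..n. (1 / ?Q) * (real (S.T n k) * ?f k + (?Q - 1) * (S.D v k * ?f k)))"
    by (simp only: sum_distrib_left)
  also have "\<dots> = (\<Sum>k=0..n. real (S.N v k 0) * ?f k)"
  proof (rule sum.cong[OF refl])
    fix k
    have "real (S.T n k) * ?f k + (?Q - 1) * (S.D v k * ?f k) = (real (S.T n k) + (?Q - 1) * S.D v k) * ?f k"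
      by (simp add: algebra_simps)
    also have "real (S.T n k) + (?Q - 1) * S.D v k = ?Q * real (S.N v k 0)"
      using S.key[of v k] assms(4) by simp
    finally show "(1 / ?Q) * (real (S.T n k) * ?f k + (?Q - 1) * (S.D v k * ?f k)) = real (S.N v k 0) * ?f k"
      using Qpos S.qpos by simp
  qed
  finally show "rank_weight_enum F n (dual_span v) x y =
    (1 / real q ^ m) *
      (heval (qpow q (poly_A q) n) (int m) x y
       + (real q ^ m - 1) * heval (qprod q (qpow q poly_B r) (qpow q (poly_A q) (n - r))) (int m) x y)"
    using L R1 R2 by simp
qed

end
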